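(* Let $R=4t\ge8$ with $t$ an integer, and $\mu=4$ (so $\gcd(R,4)=4$). Then under $G_{R,4}$ the ring $\mathbb Z_R$ has exactly three orbits: $O_0=\{\lambda:\lambda\equiv0\pmod4\}$, $O_1=\{\lambda:\lambda\equiv1\pmod2\}$ and $O_2=\{\lambda:\lambda\equiv2\pmod4\}$; $\mathrm P^+_{R,4}(\lambda)=\mathrm P^+_{R,4}(k)$ for all $\lambda\in O_k$, $k=0,1,2$; these values satisfy $$\mathrm P^+_{R,4}(0)+2\mathrm P^+_{R,4}(1)+\mathrm P^+_{R,4}(2)=\binom{R-1}{3},\quad \mathrm P^+_{R,4}(0)-\mathrm P^+_{R,4}(1)=\frac{R-4}{4},\quad \mathrm P^+_{R,4}(0)-\mathrm P^+_{R,4}(2)=-1,$$ and hence $\mathrm P^+_{R,4}(0)=\frac14\left(\binom{R-1}{3}+\frac{R-6}{2}\right)$, $\mathrm P^+_{R,4}(1)=\frac14\left(\binom{R-1}{3}-\frac{R-2}{2}\right)$, $\mathrm P^+_{R,4}(2)=\frac14\left(\binom{R-1}{3}+\frac{R+2}{2}\right)$.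
   Context: $\mathbb Z_R$ is the ring of integers modulo $R$ and $\mathbb Z_R^*$ its units; $\mathrm P^+_{R,\mu}(\lambda)$ is the number of $\mu$-element subsets of $\mathbb Z_R$ (distinct elements) whose sum in $\mathbb Z_R$ is $\lambda$. $G_{R,\mu}$ is the group of maps $\lambda\mapsto\lambda\ell+u\mu$ on $\mathbb Z_R$ with $\ell\in\mathbb Z_R^*$, $u\in\{0,\dots,R-1\}$; orbits are the equivalence classes of "$\lambda_2=\lambda_1\varphi$ for some $\varphi\in G_{R,\mu}$". *)

theory Defs
  imports Complex_Main
begin

text \<open>Z_R is represented by the residues {0..<R} (nat), arithmetic taken mod R.\<close>

definition P_plus :: "nat \<Rightarrow> nat \<Rightarrow> nat \<Rightarrow> nat" where
  "P_plus R \<mu> x = card {S. S \<subseteq> {0..<R} \<and> card S = \<mu> \<and> (\<Sum>S) mod R = x}"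

definition G_map :: "nat \<Rightarrow> nat \<Rightarrow> nat \<Rightarrow> nat \<Rightarrow> nat \<Rightarrow> nat" where
  "G_map R \<mu> l u x = (x * l + u * \<mu>) mod R"

definition G_group :: "nat \<Rightarrow> nat \<Rightarrow> (nat \<Rightarrow> nat) set" where
  "G_group R \<mu> = {G_map R \<mu> l u | l u. l < R \<and> coprime l R \<and> u < R}"

definition G_orbit :: "nat \<Rightarrow> nat \<Rightarrow> nat \<Rightarrow> nat set" where
  "G_orbit R \<mu> x = {\<phi> x | \<phi>. \<phi> \<in> G_group R \<mu>}"

definition G_orbits :: "nat \<Rightarrow> nat \<Rightarrow> nat set set" where
  "G_orbits R \<mu> = G_orbit R \<mu> ` {0..<R}"

end

theory Submission
  imports Defs "HOL-Computational_Algebra.Polynomial" "HOL-Computational_Algebra.Primes"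
begin

lemma subsets_insert_Suc:
  assumes "finite A" "a \<notin> A"
  shows "{S. S \<subseteq> insert a A \<and> card S = Suc j} =
         {S. S \<subseteq> A \<and> card S = Suc j} \<union> insert a ` {S. S \<subseteq> A \<and> card S = j}"
proof (intro equalityI subsetI)
  fix S assume S: "S \<in> {S. S \<subseteq> insert a A \<and> card S = Suc j}"
  show "S \<in> {S. S \<subseteq> A \<and> card S = Suc j} \<union> insert a ` {S. S \<subseteq> A \<and> card S = j}"
  proof (cases "a \<in> S")
    case True
    have fS: "finite S" using S assms(1) finite_subset by auto
    have "S = insert a (S - {a})" using True by auto
    moreover have "S - {a} \<subseteq> A" "card (S - {a}) = j" using S True fS by auto
    ultimately show ?thesis by blast
  next
    case False thus ?thesis using S by auto
  qed
next
  fix S assume "S \<in> {S. S \<subseteq> A \<and> card S = Suc j} \<union> insert a ` {S. S \<subseteq> A \<and> card S = j}"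
  thus "S \<in> {S. S \<subseteq> insert a A \<and> card S = Suc j}"
  proof
    assume "S \<in> {S. S \<subseteq> A \<and> card S = Suc j}" thus ?thesis by auto
  next
    assume "S \<in> insert a ` {S. S \<subseteq> A \<and> card S = j}"
    then obtain x where x: "S = insert a x" "x \<subseteq> A" "card x = j" by auto
    have "finite x" using x(2) assms(1) finite_subset by auto
    moreover have "a \<notin> x" using x(2) assms(2) by auto
    ultimately show ?thesis using x assms by auto
  qed
qed

lemma coeff_prod_lin:
  fixes c :: "nat \<Rightarrow> 'a::comm_ring_1"
  assumes "finite A"
  shows "coeff (\<Prod>a\<in>A. [:1, c a:]) k = (\<Sum>S\<in>{S. S \<subseteq> A \<and> card S = k}. \<Prod>a\<in>S. c a)"
  using assms
proof (induction A arbitrary: k rule: finite_induct)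
  case empty
  show ?case
  proof (cases k)
    case 0
    then have E: "{S. S \<subseteq> {} \<and> card S = k} = {{}}" by auto
    show ?thesis unfolding E using 0 by simp
  next
    case (Suc j)
    then have E: "{S. S \<subseteq> {} \<and> card S = k} = {}" by auto
    show ?thesis unfolding E using Suc by simp
  qed
next
  case (insert a A)
  have P: "(\<Prod>x\<in>insert a A. [:1, c x:]) = (\<Prod>x\<in>A. [:1, c x:]) + pCons 0 (smult (c a) (\<Prod>x\<in>A. [:1, c x:]))"
    using insert by (simp add: algebra_simps)
  show ?case
  proof (cases k)
    case 0
    have "{S. S \<subseteq> insert a A \<and> card S = 0} = {{}}" "{S. S \<subseteq> A \<and> card S = 0} = {{}}"
      using insert(1) by (auto dest: finite_subset)
    then show ?thesis using insert P 0 by simp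
  next
    case (Suc j)
    let ?F1 = "{S. S \<subseteq> A \<and> card S = Suc j}" and ?F0 = "{S. S \<subseteq> A \<and> card S = j}"
    have fin1: "finite ?F1" "finite (insert a ` ?F0)" using insert(1) by auto
    have disj: "?F1 \<inter> insert a ` ?F0 = {}" using insert(2) by auto
    have inj: "inj_on (insert a) ?F0" 
    proof (rule inj_onI)
      fix x y assume "x \<in> ?F0" "y \<in> ?F0" "insert a x = insert a y"
      moreover have "a \<notin> x" "a \<notin> y" using insert(2) \<open>x \<in> ?F0\<close> \<open>y \<in> ?F0\<close> by auto
      ultimately show "x = y" by (metis Diff_insert_absorb)
    qed
    have "(\<Sum>S\<in>{S. S \<subseteq> insert a A \<and> card S = k}. \<Prod>x\<in>S. c x)
       = (\<Sum>S\<in>?F1. \<Prod>x\<in>S. c x) + (\<Sum>S\<in>insert a ` ?F0. \<Prod>x\<in>S. c x)"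
      unfolding Suc subsets_insert_Suc[OF insert(1,2)] by (rule sum.union_disjoint[OF fin1 disj])
    also have "(\<Sum>S\<in>insert a ` ?F0. \<Prod>x\<in>S. c x) = (\<Sum>S\<in>?F0. \<Prod>x\<in>insert a S. c x)"
      by (rule sum.reindex[OF inj, unfolded comp_def])
    also have "\<dots> = (\<Sum>S\<in>?F0. c a * (\<Prod>x\<in>S. c x))"
    proof (rule sum.cong)
      fix x assume "x \<in> ?F0"
      then have "finite x" "a \<notin> x" using insert(1,2) finite_subset by auto
      then show "(\<Prod>y\<in>insert a x. c y) = c a * (\<Prod>y\<in>x. c y)" by simp
    qed simp
    also have "\<dots> = c a * (\<Sum>S\<in>?F0. (\<Prod>x\<in>S. c x))" by (simp add: sum_distrib_left)
    finally show ?thesis using P Suc insert.IH by simp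
  qed
qed

lemma prod_block:
  fixes w :: "'a::comm_ring_1" assumes "w^4 = 1"
  shows "(\<Prod>a<4*t. [:1, w^a:]) = ([:1,1:]*[:1,w:]*[:1,w^2:]*[:1,w^3:])^t"
proof (induction t)
  case 0 then show ?case by simp
next
  case (Suc t)
  have e: "4 * Suc t = Suc (Suc (Suc (Suc (4*t))))" by simp
  have w4: "w ^ (4*t) = 1" using assms by (simp add: power_mult)
  have "(\<Prod>a<4*Suc t. [:1, w^a:]) = (\<Prod>a<4*t. [:1, w^a:]) * ([:1,w^(4*t):]*[:1,w^(Suc (4*t)):]*[:1,w^(Suc (Suc (4*t))):]*[:1,w^(Suc (Suc (Suc (4*t)))):])"
    unfolding e prod.lessThan_Suc by (simp only: mult.assoc)
  also have "\<dots> = (\<Prod>a<4*t. [:1, w^a:]) * ([:1,1:]*[:1,w:]*[:1,w^2:]*[:1,w^3:])"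
  proof -
    have "w^(Suc (4*t)) = w" "w^(Suc (Suc (4*t))) = w^2" "w^(Suc (Suc (Suc (4*t)))) = w^3"
      using w4 by (simp_all add: power2_eq_square power3_eq_cube)
    then show ?thesis using w4 by (simp only:)
  qed
  finally show ?case using Suc by (simp add: mult.commute)
qed

lemma q_i: "[:1,1:]*[:1,\<i>:]*[:1,\<i>^2:]*[:1,\<i>^3:] = [:1,0,0,0,-1::complex:]"
  by (simp add: power2_eq_square power3_eq_cube algebra_simps)

lemma q_m1: "[:1,1:]*[:1,-1:]*[:1,(-1)^2:]*[:1,(-1)^3:] = [:1,0,-2,0,1::complex:]"
  by (simp add: power2_eq_square power3_eq_cube algebra_simps)

lemma c4_i: "coeff ([:1,0,0,0,-1::complex:]^t) 4 = - of_nat t \<and> coeff ([:1,0,0,0,-1::complex:]^t) 0 = 1"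
proof (induction t)
  case 0 then show ?case by simp
next
  case (Suc t) then show ?case by (simp add: numeral_eq_Suc algebra_simps)
qed

lemma c4_m1: "coeff ([:1,0,-2,0,1::complex:]^t) 4 = of_nat t * (2 * of_nat t - 1) \<and> coeff ([:1,0,-2,0,1::complex:]^t) 2 = - 2 * of_nat t \<and> coeff ([:1,0,-2,0,1::complex:]^t) 0 = 1"
proof (induction t)
  case 0 then show ?case by simp
next
  case (Suc t) then show ?case by (simp add: numeral_eq_Suc algebra_simps)
qed

lemma P_bij:
  fixes f g :: "nat \<Rightarrow> nat" and \<phi> \<psi> :: "nat \<Rightarrow> nat"
  assumes fR: "\<And>s. s < R \<Longrightarrow> f s < R" and gR: "\<And>s. s < R \<Longrightarrow> g s < R"
    and gf: "\<And>s. s < R \<Longrightarrow> g (f s) = s" and fg: "\<And>s. s < R \<Longrightarrow> f (g s) = s"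
    and sf: "\<And>S. S \<subseteq> {0..<R} \<Longrightarrow> card S = 4 \<Longrightarrow> (\<Sum>s\<in>S. f s) mod R = \<phi> (\<Sum>S mod R)"
    and sg: "\<And>S. S \<subseteq> {0..<R} \<Longrightarrow> card S = 4 \<Longrightarrow> (\<Sum>s\<in>S. g s) mod R = \<psi> (\<Sum>S mod R)"
    and psiphi: "\<psi> (\<phi> x) = x"
  shows "P_plus R 4 x = P_plus R 4 (\<phi> x)"
proof -
  let ?A = "{S. S \<subseteq> {0..<R} \<and> card S = 4 \<and> (\<Sum>S) mod R = x}"
  let ?B = "{S. S \<subseteq> {0..<R} \<and> card S = 4 \<and> (\<Sum>S) mod R = \<phi> x}"
  have injf: "inj_on f {0..<R}" by (rule inj_on_inverseI[where g = g]) (use gf in auto)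
  have injg: "inj_on g {0..<R}" by (rule inj_on_inverseI[where g = f]) (use fg in auto)
  have imf: "f ` S \<subseteq> {0..<R} \<and> card (f ` S) = card S \<and> \<Sum>(f ` S) = (\<Sum>s\<in>S. f s)" if "S \<subseteq> {0..<R}" for S
  proof -
    have "inj_on f S" using injf that inj_on_subset by blast
    then show ?thesis using fR that by (auto simp: card_image sum.reindex)
  qed
  have img: "g ` S \<subseteq> {0..<R} \<and> card (g ` S) = card S \<and> \<Sum>(g ` S) = (\<Sum>s\<in>S. g s)" if "S \<subseteq> {0..<R}" for S
  proof -
    have "inj_on g S" using injg that inj_on_subset by blast
    then show ?thesis using gR that by (auto simp: card_image sum.reindex)
  qed
  have "bij_betw (\<lambda>S. f ` S) ?A ?B"
  proof (rule bij_betw_byWitness[where f' = "\<lambda>S. g ` S"])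
    show "\<forall>a\<in>?A. g ` f ` a = a"
    proof
      fix a assume "a \<in> ?A"
      then have "\<forall>s\<in>a. g (f s) = s" using gf by auto
      then show "g ` f ` a = a" by (simp add: image_image)
    qed
    show "\<forall>a\<in>?B. f ` g ` a = a"
    proof
      fix a assume "a \<in> ?B"
      then have "\<forall>s\<in>a. f (g s) = s" using fg by auto
      then show "f ` g ` a = a" by (simp add: image_image)
    qed
    show "(\<lambda>S. f ` S) ` ?A \<subseteq> ?B"
    proof
      fix T assume "T \<in> (\<lambda>S. f ` S) ` ?A"
      then obtain S where S: "S \<in> ?A" "T = f ` S" by auto
      then show "T \<in> ?B" using imf[of S] sf[of S] by auto
    qed
    show "(\<lambda>S. g ` S) ` ?B \<subseteq> ?A"
    proof
      fix T assume "T \<in> (\<lambda>S. g ` S) ` ?B"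
      then obtain S where S: "S \<in> ?B" "T = g ` S" by auto
      then show "T \<in> ?A" using img[of S] sg[of S] psiphi by auto
    qed
  qed
  then show ?thesis unfolding P_plus_def by (rule bij_betw_same_card)
qed

lemma sum_mod_shift:
  "(\<Sum>s\<in>S. (s + c) mod (R::nat)) mod R = (\<Sum>S + c * card S) mod R"
proof -
  have "(\<Sum>s\<in>S. (s + c) mod R) mod R = (\<Sum>s\<in>S. s + c) mod R" by (rule mod_sum_eq)
  also have "(\<Sum>s\<in>S. s + c) = \<Sum>S + c * card S" by (simp add: sum.distrib)
  finally show ?thesis .
qed

lemma P_shift:
  assumes "R \<ge> 2" "x < R"
  shows "P_plus R 4 x = P_plus R 4 ((x + 4) mod R)"
proof (rule P_bij[where f = "\<lambda>s. (s + 1) mod R" and g = "\<lambda>s. (s + (R - 1)) mod R"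
      and \<psi> = "\<lambda>y. (y + 4 * (R - 1)) mod R"])
  fix s assume s: "s < R"
  show "(s + 1) mod R < R" "(s + (R - 1)) mod R < R" using assms by auto
  have "((s + 1) mod R + (R - 1)) mod R = (s + 1 + (R - 1)) mod R" by (simp add: mod_add_left_eq)
  also have "s + 1 + (R - 1) = s + R" using assms by simp
  finally show "((s + 1) mod R + (R - 1)) mod R = s" using s by simp
  have "((s + (R - 1)) mod R + 1) mod R = (s + (R - 1) + 1) mod R" by (metis mod_add_left_eq)
  also have "s + (R - 1) + 1 = s + R" using assms by simp
  finally show "((s + (R - 1)) mod R + 1) mod R = s" using s by (simp add: mod_Suc_eq)
next
  fix S :: "nat set" assume "card S = 4"
  then show "(\<Sum>s\<in>S. (s + 1) mod R) mod R = (\<Sum> S mod R + 4) mod R"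
    "(\<Sum>s\<in>S. (s + (R - 1)) mod R) mod R = (\<Sum> S mod R + 4 * (R - 1)) mod R"
  proof -
    have "(\<Sum>s\<in>S. (s + 1) mod R) mod R = (\<Sum>S + 1 * card S) mod R" by (rule sum_mod_shift)
    also have "\<dots> = (\<Sum> S mod R + 4) mod R" using \<open>card S = 4\<close> by (metis mod_add_left_eq mult_1)
    finally show "(\<Sum>s\<in>S. (s + 1) mod R) mod R = (\<Sum> S mod R + 4) mod R" .
    have "(\<Sum>s\<in>S. (s + (R - 1)) mod R) mod R = (\<Sum>S + (R - 1) * card S) mod R" by (rule sum_mod_shift)
    also have "\<dots> = (\<Sum> S mod R + 4 * (R - 1)) mod R" using \<open>card S = 4\<close> by (metis mod_add_left_eq mult.commute)
    finally show "(\<Sum>s\<in>S. (s + (R - 1)) mod R) mod R = (\<Sum> S mod R + 4 * (R - 1)) mod R" .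
  qed
next
  have "((x + 4) mod R + 4 * (R - 1)) mod R = (x + 4 + 4 * (R - 1)) mod R" by (metis mod_add_left_eq)
  also have "x + 4 + 4 * (R - 1) = x + R * 4" using assms by simp
  finally show "((x + 4) mod R + 4 * (R - 1)) mod R = x" using assms by simp
qed

lemma mod_neg_aux:
  assumes "(N + M) mod R = (0::nat)" "R > 0"
  shows "N mod R = (R - M mod R) mod R"
proof -
  have "(N mod R + M mod R) mod R = 0" using assms by (simp add: mod_add_eq)
  moreover have "N mod R < R" "M mod R < R" using assms by auto
  ultimately have "N mod R + M mod R = 0 \<or> N mod R + M mod R = R"
  proof -
    assume a: "(N mod R + M mod R) mod R = 0" "N mod R < R" "M mod R < R"
    show ?thesis
    proof (cases "N mod R + M mod R < R")
      case True then show ?thesis using a by simp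
    next
      case False
      have "(N mod R + M mod R) mod R = (N mod R + M mod R - R) mod R"
        by (rule le_mod_geq) (use False in simp)
      also have "\<dots> = N mod R + M mod R - R" by (rule mod_less) (use a(2,3) in linarith)
      finally show ?thesis using a(1) False by simp
    qed
  qed
  then show ?thesis
  proof
    assume "N mod R + M mod R = 0" then show ?thesis by simp
  next
    assume h: "N mod R + M mod R = R"
    have n: "N mod R < R" using assms by simp
    have e: "N mod R = R - M mod R" using h by linarith
    have "0 < M mod R" using h n by linarith
    then have "R - M mod R < R" using assms by linarith
    then show ?thesis using e by simp
  qed
qed

lemma P_neg:
  assumes "R \<ge> 2" "x < R"
  shows "P_plus R 4 x = P_plus R 4 ((R - x) mod R)"
proof (rule P_bij[where f = "\<lambda>s. (R - s) mod R" and g = "\<lambda>s. (R - s) mod R"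
      and \<psi> = "\<lambda>y. (R - y) mod R"])
  fix s assume s: "s < R"
  show "(R - s) mod R < R" "(R - s) mod R < R" using assms by auto
  show "(R - (R - s) mod R) mod R = s" using s by (cases "s = 0") auto
  show "(R - (R - s) mod R) mod R = s" using s by (cases "s = 0") auto
next
  fix S :: "nat set" assume S: "S \<subseteq> {0..<R}"
  have "((\<Sum>s\<in>S. (R - s) mod R) + \<Sum>S) mod R = (\<Sum>s\<in>S. (R - s) mod R + s) mod R"
    by (simp add: sum.distrib)
  also have "\<dots> = (\<Sum>s\<in>S. ((R - s) mod R + s) mod R) mod R" by (simp add: mod_sum_eq)
  also have "(\<Sum>s\<in>S. ((R - s) mod R + s) mod R) = 0"
  proof (rule sum.neutral, rule ballI)
    fix s assume "s \<in> S"
    then have "s < R" using S by auto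
    then show "((R - s) mod R + s) mod R = 0" by (cases "s = 0") auto
  qed
  finally have "((\<Sum>s\<in>S. (R - s) mod R) + \<Sum>S) mod R = 0" by simp
  then have "(\<Sum>s\<in>S. (R - s) mod R) mod R = (R - \<Sum> S mod R) mod R"
    by (rule mod_neg_aux) (use assms in simp)
  then show "(\<Sum>s\<in>S. (R - s) mod R) mod R = (R - \<Sum> S mod R) mod R"
    "(\<Sum>s\<in>S. (R - s) mod R) mod R = (R - \<Sum> S mod R) mod R" by - 
next
  show "(R - (R - x) mod R) mod R = x" using assms by (cases "x = 0") auto
qed

lemma P_period:
  assumes "R \<ge> 2" "4 * k + r < R"
  shows "P_plus R 4 (4 * k + r) = P_plus R 4 r"
  using assms(2)
proof (induction k)
  case 0 then show ?case by simp
next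
  case (Suc k)
  have "P_plus R 4 (4 * k + r) = P_plus R 4 ((4 * k + r + 4) mod R)"
    by (rule P_shift[OF assms(1)]) (use Suc.prems in auto)
  also have "(4 * k + r + 4) mod R = 4 * Suc k + r" using Suc.prems by simp
  finally show ?case using Suc by simp
qed

lemma sum_block4:
  fixes f :: "nat \<Rightarrow> 'a::comm_monoid_add"
  shows "(\<Sum>x<4*t. f x) = (\<Sum>k<t. f(4*k) + f(4*k+1) + f(4*k+2) + f(4*k+3))"
proof (induction t)
  case 0 then show ?case by simp
next
  case (Suc t)
  have e: "4 * Suc t = Suc (Suc (Suc (Suc (4*t))))" by simp
  have e3: "Suc (4*t) = 4*t+1" "Suc (4*t+1) = 4*t+2" "Suc (4*t+2) = 4*t+3" by simp_all
  have "(\<Sum>x<4*Suc t. f x) = (\<Sum>x<4*t. f x) + f (4*t) + f (Suc(4*t)) + f (Suc(Suc(4*t))) + f (Suc(Suc(Suc(4*t))))"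
    by (simp only: e sum.lessThan_Suc)
  then show ?case by (simp only: Suc.IH e3 sum.lessThan_Suc add.assoc)
qed

lemma P3_eq_P1:
  assumes "R = 4*t" "t \<ge> 2"
  shows "P_plus R 4 3 = P_plus R 4 1"
proof -
  have "P_plus R 4 1 = P_plus R 4 ((R - 1) mod R)" by (rule P_neg) (use assms in auto)
  also have "(R - 1) mod R = 4 * (t - 1) + 3" using assms by simp
  also have "P_plus R 4 (4 * (t - 1) + 3) = P_plus R 4 3" by (rule P_period) (use assms in auto)
  finally show ?thesis by simp
qed

lemma P_class:
  assumes "R = 4*t" "t \<ge> 2" "x < R"
  shows "P_plus R 4 x = P_plus R 4 (x mod 4)"
proof -
  have "x = 4 * (x div 4) + x mod 4" by simp
  then have "P_plus R 4 x = P_plus R 4 (4 * (x div 4) + x mod 4)" by simp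
  also have "\<dots> = P_plus R 4 (x mod 4)" by (rule P_period) (use assms in auto)
  finally show ?thesis .
qed

lemma weighted:
  fixes w :: complex
  assumes R: "R = 4*t" "t \<ge> 2" and w: "w^4 = 1"
  shows "(\<Sum>S\<in>{S. S \<subseteq> {0..<R} \<and> card S = 4}. w ^ \<Sum>S) = of_nat t * (of_nat (P_plus R 4 0) + of_nat (P_plus R 4 1) * w + of_nat (P_plus R 4 2) * w^2 + of_nat (P_plus R 4 1) * w^3)"
proof -
  let ?F = "{S. S \<subseteq> {0..<R} \<and> card S = 4}"
  have finF: "finite ?F" by simp
  have wR: "w ^ R = 1" using R w by (simp add: power_mult)
  have wmod: "w ^ n = w ^ (n mod R)" for n
  proof -
    have "w ^ n = w ^ (R * (n div R) + n mod R)" by simp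
    also have "\<dots> = w ^ (n mod R)" by (simp only: power_add power_mult wR) simp
    finally show ?thesis .
  qed
  have "(\<Sum>S\<in>?F. w ^ \<Sum>S) = (\<Sum>x\<in>{..<R}. \<Sum>S\<in>{S\<in>?F. \<Sum>S mod R = x}. w ^ \<Sum>S)"
    by (rule sum.group[symmetric]) (use finF R in auto)
  also have "\<dots> = (\<Sum>x\<in>{..<R}. of_nat (P_plus R 4 x) * w ^ x)"
  proof (rule sum.cong[OF refl])
    fix x assume "x \<in> {..<R}"
    have seteq: "{S\<in>?F. \<Sum>S mod R = x} = {S. S \<subseteq> {0..<R} \<and> card S = 4 \<and> (\<Sum>S) mod R = x}" by auto
    have "(\<Sum>S\<in>{S\<in>?F. \<Sum>S mod R = x}. w ^ \<Sum>S) = (\<Sum>S\<in>{S\<in>?F. \<Sum>S mod R = x}. w ^ x)"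
      by (rule sum.cong[OF refl]) (subst wmod, simp)
    also have "\<dots> = of_nat (card {S\<in>?F. \<Sum>S mod R = x}) * w ^ x" by simp
    finally show "(\<Sum>S\<in>{S\<in>?F. \<Sum>S mod R = x}. w ^ \<Sum>S) = of_nat (P_plus R 4 x) * w ^ x"
      unfolding P_plus_def seteq .
  qed
  also have "\<dots> = (\<Sum>k<t. of_nat (P_plus R 4 0) + of_nat (P_plus R 4 1) * w + of_nat (P_plus R 4 2) * w^2 + of_nat (P_plus R 4 1) * w^3)"
    unfolding R(1) sum_block4
  proof (rule sum.cong[OF refl])
    fix k assume k: "k \<in> {..<t}"
    have w4k: "w ^ (4 * k) = 1" using w by (simp add: power_mult)
    have pj: "P_plus (4*t) 4 (4*k + j) = P_plus (4*t) 4 j" if "j < 4" for j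
      by (rule P_period) (use k that R in auto)
    have p0: "P_plus (4*t) 4 (4*k) = P_plus (4*t) 4 0"
      using P_period[of "4*t" k 0] k R by auto
    have p3: "P_plus (4*t) 4 3 = P_plus (4*t) 4 1" using P3_eq_P1[of "4*t" t] R by simp
    have p1: "P_plus (4*t) 4 (4*k+1) = P_plus (4*t) 4 1" by (rule pj) simp
    have p2: "P_plus (4*t) 4 (4*k+2) = P_plus (4*t) 4 2" by (rule pj) simp
    have p3': "P_plus (4*t) 4 (4*k+3) = P_plus (4*t) 4 1" using p3 by (subst pj) simp_all
    show "of_nat (P_plus (4 * t) 4 (4 * k)) * w ^ (4 * k) + of_nat (P_plus (4 * t) 4 (4 * k + 1)) * w ^ (4 * k + 1) +
         of_nat (P_plus (4 * t) 4 (4 * k + 2)) * w ^ (4 * k + 2) + of_nat (P_plus (4 * t) 4 (4 * k + 3)) * w ^ (4 * k + 3) =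
         of_nat (P_plus (4 * t) 4 0) + of_nat (P_plus (4 * t) 4 1) * w + of_nat (P_plus (4 * t) 4 2) * w\<^sup>2 + of_nat (P_plus (4 * t) 4 1) * w ^ 3"
      unfolding p0 p1 p2 p3'
      using w4k by (simp add: power_add power2_eq_square)
  qed
  also have "\<dots> = of_nat t * (of_nat (P_plus R 4 0) + of_nat (P_plus R 4 1) * w + of_nat (P_plus R 4 2) * w^2 + of_nat (P_plus R 4 1) * w^3)"
    by simp
  finally show ?thesis .
qed

lemma weighted_coeff:
  fixes w :: complex
  assumes R: "R = 4*t"
  shows "(\<Sum>S\<in>{S. S \<subseteq> {0..<R} \<and> card S = 4}. w ^ \<Sum>S) = coeff ((\<Prod>a<4*t. [:1, w^a:])) 4"
proof -
  have "coeff ((\<Prod>a\<in>{0..<R}. [:1, w^a:])) 4 = (\<Sum>S\<in>{S. S \<subseteq> {0..<R} \<and> card S = 4}. \<Prod>a\<in>S. w^a)"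
    by (rule coeff_prod_lin) simp
  also have "\<dots> = (\<Sum>S\<in>{S. S \<subseteq> {0..<R} \<and> card S = 4}. w ^ \<Sum>S)" by (simp add: power_sum)
  finally show ?thesis using R by (simp add: atLeast0LessThan)
qed

lemma orbit_mem: "y \<in> G_orbit R \<mu> x \<longleftrightarrow> (\<exists>l u. l < R \<and> coprime l R \<and> u < R \<and> y = (x*l + u*\<mu>) mod R)"
proof
  assume "y \<in> G_orbit R \<mu> x"
  then obtain \<phi> where p: "y = \<phi> x" "\<phi> \<in> G_group R \<mu>" unfolding G_orbit_def by auto
  then obtain l u where "\<phi> = G_map R \<mu> l u" "l < R" "coprime l R" "u < R" unfolding G_group_def by auto
  then show "\<exists>l u. l < R \<and> coprime l R \<and> u < R \<and> y = (x*l + u*\<mu>) mod R" using p by (auto simp: G_map_def)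
next
  assume "\<exists>l u. l < R \<and> coprime l R \<and> u < R \<and> y = (x*l + u*\<mu>) mod R"
  then obtain l u where lu: "l < R" "coprime l R" "u < R" "y = (x*l + u*\<mu>) mod R" by blast
  then have "G_map R \<mu> l u \<in> G_group R \<mu>" unfolding G_group_def by auto
  moreover have "y = G_map R \<mu> l u x" using lu by (simp add: G_map_def)
  ultimately show "y \<in> G_orbit R \<mu> x" unfolding G_orbit_def by auto
qed

lemma orbit_l1:
  assumes "R = 4 * r" "R \<ge> 8" "x < R" "y < R" "x mod 4 = y mod 4"
  shows "y \<in> G_orbit R 4 x"
proof -
  have x: "x = 4 * (x div 4) + x mod 4" and y: "y = 4 * (y div 4) + y mod 4" by simp_all
  have "x div 4 < r" using assms(1,3) by linarith
  then have k: "y + R - x = 4 * (y div 4 + r - x div 4)" using x y assms(1,5) by linarith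
  define k where "k = y div 4 + r - x div 4"
  note k = k[folded k_def]
  have "x * 1 + k * 4 = y + R" using k assms(3) by linarith
  then have "y = (x * 1 + k * 4) mod R" using assms by simp
  moreover have "k < R" using k assms by linarith
  moreover have "(1::nat) < R" "coprime (1::nat) R" using assms by auto
  ultimately show ?thesis unfolding orbit_mem by blast
qed

lemma orbit_l3:
  assumes "R = 4 * r" "R \<ge> 8" "x < R" "y < R" "odd x" "odd y" "x mod 4 \<noteq> y mod 4"
  shows "y \<in> G_orbit R 4 x"
proof -
  have x: "x = 4 * (x div 4) + x mod 4" and y: "y = 4 * (y div 4) + y mod 4" by simp_all
  have "x mod 4 = 1 \<or> x mod 4 = 3" "y mod 4 = 1 \<or> y mod 4 = 3" using assms(5,6) by presburger+
  then have "x mod 4 + y mod 4 = 4" using assms(7) by auto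
  moreover have "x + y = 4 * (x div 4) + 4 * (y div 4) + (x mod 4 + y mod 4)" by simp
  ultimately have k: "x + y = 4 * (x div 4 + y div 4 + 1)" by simp
  define k where "k = x div 4 + y div 4 + 1"
  note k = k[folded k_def]
  have "x * (R - 1) + k * 4 = x * R + y"
  proof -
    have "x * (R - 1) + x = x * R" using assms by (simp add: algebra_simps)
    then show ?thesis using k by linarith
  qed
  then have "y = (x * (R - 1) + k * 4) mod R" using assms by simp
  moreover have "k < R" using k assms by linarith
  moreover have "R - 1 < R" using assms by auto
  moreover have "coprime (R - 1) R"
  proof -
    have "R = Suc (R - 1)" using assms by simp
    then show ?thesis by (metis coprime_Suc_right_nat)
  qed
  ultimately show ?thesis unfolding orbit_mem by blast
qed

lemma orbit_sub:
  assumes "R = 4 * r" "R \<ge> 8" "y \<in> G_orbit R 4 x"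
  shows "y < R \<and> (\<exists>m. (m = 1 \<or> m = 3) \<and> y mod 4 = (x mod 4 * m) mod 4)"
proof -
  obtain l u where lu: "l < R" "coprime l R" "u < R" "y = (x*l + u*4) mod R"
    using assms(3) unfolding orbit_mem by blast
  have "y < R" using lu assms by simp
  have "odd l"
  proof
    assume "even l"
    then have "2 dvd gcd l R" using assms by simp
    then show False using lu(2) by simp
  qed
  then have m: "l mod 4 = 1 \<or> l mod 4 = 3" by presburger
  have "y mod 4 = (x*l + u*4) mod 4" using lu(4) assms(1) by (simp add: mod_mod_cancel)
  also have "\<dots> = (x * l) mod 4" by simp
  also have "\<dots> = (x mod 4 * (l mod 4)) mod 4" by (simp add: mod_mult_eq)
  finally show ?thesis using m \<open>y < R\<close> by blast
qed

lemma orbits_eq: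
  assumes "R = 4*r" "R \<ge> 8"
  shows "G_orbits R 4 = {{x. x < R \<and> x mod 4 = 0}, {x. x < R \<and> x mod 2 = 1}, {x. x < R \<and> x mod 4 = 2}}"
proof -
  let ?O0 = "{x. x < R \<and> x mod 4 = 0}" and ?O1 = "{x. x < R \<and> x mod 2 = 1}" and ?O2 = "{x. x < R \<and> x mod 4 = 2}"
  have o0: "G_orbit R 4 x = ?O0" if x: "x < R" "x mod 4 = 0" for x
  proof (intro equalityI subsetI)
    fix y assume "y \<in> G_orbit R 4 x"
    then show "y \<in> ?O0" using orbit_sub[OF assms, of y x] x by auto
  next
    fix y assume "y \<in> ?O0"
    then show "y \<in> G_orbit R 4 x" using orbit_l1[OF assms] x by auto
  qed
  have o2: "G_orbit R 4 x = ?O2" if x: "x < R" "x mod 4 = 2" for x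
  proof (intro equalityI subsetI)
    fix y assume "y \<in> G_orbit R 4 x"
    then show "y \<in> ?O2" using orbit_sub[OF assms, of y x] x by auto
  next
    fix y assume "y \<in> ?O2"
    then show "y \<in> G_orbit R 4 x" using orbit_l1[OF assms] x by auto
  qed
  have o1: "G_orbit R 4 x = ?O1" if x: "x < R" "x mod 2 = 1" for x
  proof (intro equalityI subsetI)
    fix y assume "y \<in> G_orbit R 4 x"
    then obtain m where m: "y < R" "m = 1 \<or> m = 3" "y mod 4 = (x mod 4 * m) mod 4"
      using orbit_sub[OF assms, of y x] by auto
    have "x mod 4 = 1 \<or> x mod 4 = 3" using x(2) by presburger
    then have "y mod 4 = 1 \<or> y mod 4 = 3" using m by auto
    then have "y mod 2 = 1" by presburger
    then show "y \<in> ?O1" using m by auto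
  next
    fix y assume y: "y \<in> ?O1"
    show "y \<in> G_orbit R 4 x"
    proof (cases "x mod 4 = y mod 4")
      case True then show ?thesis using orbit_l1[OF assms] x y by auto
    next
      case False
      have "y mod 2 = 1" using y by simp
      then have "odd x" "odd y" using x by presburger+
      then show ?thesis using orbit_l3[OF assms] x y False by auto
    qed
  qed
  show ?thesis unfolding G_orbits_def
  proof (intro equalityI subsetI)
    fix Ob assume "Ob \<in> G_orbit R 4 ` {0..<R}"
    then obtain x where x: "x < R" "Ob = G_orbit R 4 x" by auto
    have "x mod 4 = 0 \<or> x mod 4 = 2 \<or> x mod 2 = 1" by presburger
    then show "Ob \<in> {?O0, ?O1, ?O2}"
    proof (elim disjE)
      assume "x mod 4 = 0" then show ?thesis using o0[OF x(1)] x(2) by simp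
    next
      assume "x mod 4 = 2" then show ?thesis using o2[OF x(1)] x(2) by simp
    next
      assume "x mod 2 = 1" then show ?thesis using o1[OF x(1)] x(2) by simp
    qed
  next
    fix Ob assume "Ob \<in> {?O0, ?O1, ?O2}"
    moreover have "?O0 \<in> G_orbit R 4 ` {0..<R}"
      by (rule rev_image_eqI[of 0]) (use o0[of 0] assms in auto)
    moreover have "?O1 \<in> G_orbit R 4 ` {0..<R}"
      by (rule rev_image_eqI[of 1]) (use o1[of 1] assms in auto)
    moreover have "?O2 \<in> G_orbit R 4 ` {0..<R}"
      by (rule rev_image_eqI[of 2]) (use o2[of 2] assms in auto)
    ultimately show "Ob \<in> G_orbit R 4 ` {0..<R}" by auto
  qed
qed

theorem theorem4p13:
  fixes R t :: nat
  assumes "R = 4 * t" and "R \<ge> 8"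
  defines "O0 \<equiv> {x. x < R \<and> x mod 4 = 0}"
      and "O1 \<equiv> {x. x < R \<and> x mod 2 = 1}"
      and "O2 \<equiv> {x. x < R \<and> x mod 4 = 2}"
  shows "(G_orbits R 4 = {O0, O1, O2})
    \<and> (\<forall>x\<in>O0. P_plus R 4 x = P_plus R 4 0)
    \<and> (\<forall>x\<in>O1. P_plus R 4 x = P_plus R 4 1)
    \<and> (\<forall>x\<in>O2. P_plus R 4 x = P_plus R 4 2)
    \<and> (P_plus R 4 0 + 2 * P_plus R 4 1 + P_plus R 4 2 = (R - 1) choose 3)
    \<and> (real (P_plus R 4 0) - real (P_plus R 4 1) = (real R - 4) / 4)
    \<and> (real (P_plus R 4 0) - real (P_plus R 4 2) = -1)
    \<and> (real (P_plus R 4 0) = 1/4 * (real ((R - 1) choose 3) + (real R - 6) / 2))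
    \<and> (real (P_plus R 4 1) = 1/4 * (real ((R - 1) choose 3) - (real R - 2) / 2))
    \<and> (real (P_plus R 4 2) = 1/4 * (real ((R - 1) choose 3) + (real R + 2) / 2))"
proof -
  have t2: "t \<ge> 2" using assms(1,2) by linarith
  define p0 where "p0 = P_plus R 4 0"
  define p1 where "p1 = P_plus R 4 1"
  define p2 where "p2 = P_plus R 4 2"
  define C where "C = (R - 1) choose 3"
  let ?F = "{S. S \<subseteq> {0..<R} \<and> card S = 4}"
  have orb: "G_orbits R 4 = {O0, O1, O2}"
    unfolding O0_def O1_def O2_def by (rule orbits_eq[OF assms(1,2)])
  have c0: "\<forall>x\<in>O0. P_plus R 4 x = P_plus R 4 0"
  proof
    fix x assume "x \<in> O0"
    then have x: "x < R" "x mod 4 = 0" unfolding O0_def by auto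
    have "P_plus R 4 x = P_plus R 4 (x mod 4)" by (rule P_class[OF assms(1) t2 x(1)])
    then show "P_plus R 4 x = P_plus R 4 0" unfolding x(2) .
  qed
  have c2: "\<forall>x\<in>O2. P_plus R 4 x = P_plus R 4 2"
  proof
    fix x assume "x \<in> O2"
    then have x: "x < R" "x mod 4 = 2" unfolding O2_def by auto
    have "P_plus R 4 x = P_plus R 4 (x mod 4)" by (rule P_class[OF assms(1) t2 x(1)])
    then show "P_plus R 4 x = P_plus R 4 2" unfolding x(2) .
  qed
  have c1: "\<forall>x\<in>O1. P_plus R 4 x = P_plus R 4 1"
  proof
    fix x assume "x \<in> O1"
    then have x: "x < R" "x mod 2 = 1" unfolding O1_def by auto
    then have "x mod 4 = 1 \<or> x mod 4 = 3" by presburger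
    moreover have "P_plus R 4 x = P_plus R 4 (x mod 4)" by (rule P_class[OF assms(1) t2 x(1)])
    ultimately show "P_plus R 4 x = P_plus R 4 1"
      using P3_eq_P1[OF assms(1) t2] by (elim disjE) simp_all
  qed
  have "(\<Sum>S\<in>?F. (1::complex) ^ \<Sum>S) = of_nat t * (of_nat p0 + of_nat p1 * 1 + of_nat p2 * 1^2 + of_nat p1 * 1^3)"
    unfolding p0_def p1_def p2_def by (rule weighted[OF assms(1) t2]) simp
  moreover have "(\<Sum>S\<in>?F. (1::complex) ^ \<Sum>S) = of_nat (R choose 4)"
    using n_subsets[of "{0..<R}" 4] by simp
  ultimately have "of_nat (R choose 4) = (of_nat (t * (p0 + 2 * p1 + p2)) :: complex)" by (simp add: algebra_simps)
  then have W1: "R choose 4 = t * (p0 + 2 * p1 + p2)" by (simp only: of_nat_eq_iff)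
  have "4 * (R choose 4) = R * ((R - 1) choose 3)"
    using Suc_times_binomial[of 3 "R - 1"] assms(2) by (simp add: numeral_eq_Suc)
  then have "4 * (t * (p0 + 2 * p1 + p2)) = 4 * (t * C)" using W1 assms(1) C_def by auto
  then have S: "p0 + 2 * p1 + p2 = C" using t2 by simp
  have "(\<Sum>S\<in>?F. \<i> ^ \<Sum>S) = of_nat t * (of_nat p0 + of_nat p1 * \<i> + of_nat p2 * \<i>^2 + of_nat p1 * \<i>^3)"
    unfolding p0_def p1_def p2_def by (rule weighted[OF assms(1) t2]) simp
  moreover have "(\<Sum>S\<in>?F. \<i> ^ \<Sum>S) = - of_nat t"
  proof -
    have i4: "\<i> ^ 4 = (1::complex)"
    proof -
      have "\<i> ^ 4 = (\<i> ^ 2) ^ (2::nat)" by (simp only: power_mult[symmetric]) simp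
      then show ?thesis by simp
    qed
    have "(\<Prod>a<4*t. [:1, \<i>^a:]) = [:1,0,0,0,-1:]^t" by (simp only: prod_block[OF i4] q_i)
    then show ?thesis unfolding weighted_coeff[OF assms(1)] using c4_i by simp
  qed
  ultimately have "of_nat t * (of_nat p0 - of_nat p2) = (- of_nat t :: complex)"
    by (simp add: power2_eq_square power3_eq_cube algebra_simps)
  then have "(of_nat p0 - of_nat p2 :: complex) = - 1" using t2
    by (metis mult_cancel_left mult_minus1_right of_nat_eq_0_iff not_numeral_le_zero le_zero_eq)
  then have "(of_nat (p0 + 1) :: complex) = of_nat p2" by (simp add: algebra_simps)
  then have W2: "p0 + 1 = p2" by (simp only: of_nat_eq_iff)
  have "(\<Sum>S\<in>?F. (-1::complex) ^ \<Sum>S) = of_nat t * (of_nat p0 + of_nat p1 * (-1) + of_nat p2 * (-1)^2 + of_nat p1 * (-1)^3)"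
    unfolding p0_def p1_def p2_def by (rule weighted[OF assms(1) t2]) simp
  moreover have "(\<Sum>S\<in>?F. (-1::complex) ^ \<Sum>S) = of_nat t * (2 * of_nat t - 1)"
  proof -
    have m4: "(-1::complex) ^ 4 = 1" by simp
    have "(\<Prod>a<4*t. [:1, (-1::complex)^a:]) = [:1,0,-2,0,1:]^t" by (simp only: prod_block[OF m4] q_m1)
    then show ?thesis unfolding weighted_coeff[OF assms(1)] using c4_m1 by simp
  qed
  ultimately have "of_nat t * (of_nat p0 + of_nat p2 - 2 * of_nat p1) = (of_nat t * (2 * of_nat t - 1) :: complex)"
    by (simp add: algebra_simps)
  then have "(of_nat p0 + of_nat p2 - 2 * of_nat p1 :: complex) = 2 * of_nat t - 1" using t2 by simp
  then have "(of_nat (p0 + p2 + 1) :: complex) = of_nat (2 * p1 + 2 * t)" by (simp add: algebra_simps)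
  then have W3: "p0 + p2 + 1 = 2 * p1 + 2 * t" by (simp only: of_nat_eq_iff)
  have rR: "real R = 4 * real t" using assms(1) by simp
  have e1: "real p0 + 2 * real p1 + real p2 = real C" using S by (metis of_nat_add of_nat_mult of_nat_numeral)
  have e2: "real p0 + 1 = real p2" using W2 by (metis of_nat_1 of_nat_add)
  have e3: "real p0 + real p2 + 1 = 2 * real p1 + 2 * real t" using W3 by (metis of_nat_1 of_nat_add of_nat_mult of_nat_numeral)
  have a1: "(real R - 4) / 4 = real t - 1" using rR by (simp add: field_simps)
  have a2: "(real R - 6) / 2 = 2 * real t - 3" using rR by (simp add: field_simps)
  have a3: "(real R - 2) / 2 = 2 * real t - 1" using rR by (simp add: field_simps)
  have a4: "(real R + 2) / 2 = 2 * real t + 1" using rR by (simp add: field_simps)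
  have g1: "real p0 - real p1 = (real R - 4) / 4" unfolding a1 using e2 e3 by linarith
  have g2: "real p0 - real p2 = -1" using e2 by linarith
  have hg3: "4 * real p0 = real C + (2 * real t - 3)" using e1 e2 e3 by linarith
  have g3: "real p0 = 1/4 * (real C + (real R - 6) / 2)" unfolding a2 using hg3 by simp
  have hg4: "4 * real p1 = real C - (2 * real t - 1)" using e1 e2 e3 by linarith
  have g4: "real p1 = 1/4 * (real C - (real R - 2) / 2)" unfolding a3 using hg4 by simp
  have hg5: "4 * real p2 = real C + (2 * real t + 1)" using e1 e2 e3 by linarith
  have g5: "real p2 = 1/4 * (real C + (real R + 2) / 2)" unfolding a4 using hg5 by simp
  show ?thesis
    using orb c0 c1 c2 S g1 g2 g3 g4 g5 unfolding p0_def p1_def p2_def C_def by blast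
qed

end
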